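(* Let $n\geq 3$, $d\geq 2$ and $\ell\in\mathbb{R}_{>0}^n$. The map $\varphi_d:M_d(\ell)\to M_{d+1}(\ell)$ is $2$-to-$1$ on the set of $d$-dimensional polygons and $1$-to-$1$ elsewhere; that is, for $[P]\in M_d(\ell)$ the set $\varphi_d^{-1}(\varphi_d([P]))$ has exactly two elements if $\dim(P)=d$ and exactly one element if $\dim(P)<d$.
   Context: $V_d(\ell)=\{(\mathbf{v}_1,\ldots,\mathbf{v}_{n-1})\in(\mathbb{R}^d)^{n-1} : \|\mathbf{v}_i-\mathbf{v}_{i-1}\|=l_i,\ i=1,\ldots,n\}$ with $\mathbf{v}_0=\mathbf{v}_n=\mathbf{0}$; $M_d(\ell)=V_d(\ell)/SO(d)$ with $SO(d)$ acting diagonally, $[P]$ the class of $P$. $\dim(P)$ (and $\dim([P])$) is the dimension of the linear span of the vertices of $P$. For a fixed linear Euclidean isometry $f_d:\mathbb{R}^d\to\mathbb{R}^{d+1}$, $F_d(\mathbf{v}_1,\ldots,\mathbf{v}_{n-1})=(f_d(\mathbf{v}_1),\ldots,f_d(\mathbf{v}_{n-1}))$ and $\varphi_d([P])=[F_d(P)]$. *)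

theory Defs
  imports Jordan_Normal_Form.DL_Rank
begin

text \<open>Points of R^d are real vectors of dimension d. A polygon
(v_1,...,v_{n-1}) in (R^d)^{n-1} is a list P of length n-1; v_0 = v_n = 0.
The length vector l = (l_1,...,l_n) is a list of length n.\<close>

definition vtx :: "nat \<Rightarrow> nat \<Rightarrow> real vec list \<Rightarrow> nat \<Rightarrow> real vec" where
  "vtx d n P i = (if i = 0 \<or> i = n then 0\<^sub>v d else P ! (i - 1))"

definition enorm :: "real vec \<Rightarrow> real" where
  "enorm v = sqrt (v \<bullet> v)"

definition Vsp :: "nat \<Rightarrow> real list \<Rightarrow> real vec list set" where
  "Vsp d l = {P. length P = length l - 1 \<and> (\<forall>v\<in>set P. v \<in> carrier_vec d) \<and>
     (\<forall>i\<in>{1..length l}. enorm (vtx d (length l) P i - vtx d (length l) P (i - 1)) = l ! (i - 1))}"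

definition SOd :: "nat \<Rightarrow> real mat set" where
  "SOd d = {A \<in> carrier_mat d d. A * A\<^sup>T = 1\<^sub>m d \<and> det A = 1}"

definition cls :: "nat \<Rightarrow> real vec list \<Rightarrow> real vec list set" where
  "cls d P = {map (\<lambda>v. A *\<^sub>v v) P | A. A \<in> SOd d}"

definition Msp :: "nat \<Rightarrow> real list \<Rightarrow> real vec list set set" where
  "Msp d l = cls d ` Vsp d l"

text \<open>dim(P): dimension of the linear span of the vertices (v_0 = v_n = 0 add nothing).\<close>
definition pdim :: "nat \<Rightarrow> real vec list \<Rightarrow> nat" where
  "pdim d P = vec_space.rank d (mat_of_cols d P)"

definition lin_isom :: "nat \<Rightarrow> real mat \<Rightarrow> bool" where
  "lin_isom d B \<longleftrightarrow> B \<in> carrier_mat (d + 1) d \<and> B\<^sup>T * B = 1\<^sub>m d"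

definition Fmap :: "real mat \<Rightarrow> real vec list \<Rightarrow> real vec list" where
  "Fmap B P = map (\<lambda>v. B *\<^sub>v v) P"

definition phi :: "nat \<Rightarrow> real mat \<Rightarrow> real vec list set \<Rightarrow> real vec list set" where
  "phi d B c = cls (d + 1) (Fmap B (SOME P. P \<in> c))"

end

theory Submission
  imports Defs
begin

definition orthm :: "nat \<Rightarrow> real mat \<Rightarrow> bool" where
  "orthm n A \<longleftrightarrow> A \<in> carrier_mat n n \<and> A * A\<^sup>T = 1\<^sub>m n"

lemma orthm_T: "orthm n A \<Longrightarrow> A\<^sup>T * A = 1\<^sub>m n"
  unfolding orthm_def by (meson mat_mult_left_right_inverse transpose_carrier_mat)

lemma orthm_transpose: "orthm n A \<Longrightarrow> orthm n (A\<^sup>T)"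
  using orthm_T unfolding orthm_def by auto

lemma orthm_one: "orthm n (1\<^sub>m n)"
  unfolding orthm_def by auto

lemma orthm_mult: assumes "orthm n A" "orthm n B" shows "orthm n (A * B)"
proof -
  have A: "A \<in> carrier_mat n n" and B: "B \<in> carrier_mat n n" using assms orthm_def by auto
  have BB: "B * B\<^sup>T = 1\<^sub>m n" using assms orthm_def by auto
  have "A * B * (A * B)\<^sup>T = A * B * (B\<^sup>T * A\<^sup>T)"
    using A B by (simp add: transpose_mult)
  also have "\<dots> = A * (B * (B\<^sup>T * A\<^sup>T))" using A B by (auto intro!: assoc_mult_mat)
  also have "B * (B\<^sup>T * A\<^sup>T) = (B * B\<^sup>T) * A\<^sup>T" using A B by (auto intro!: assoc_mult_mat[symmetric])
  also have "\<dots> = A\<^sup>T" using BB A by auto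
  also have "A * A\<^sup>T = 1\<^sub>m n" using assms A unfolding orthm_def by auto
  finally show ?thesis using A B unfolding orthm_def by auto
qed

lemma orthm_det: assumes "orthm n A" shows "det A = 1 \<or> det A = -1"
proof -
  have A: "A \<in> carrier_mat n n" using assms orthm_def by auto
  have "det A * det A = 1"
    using det_mult[OF A, of "A\<^sup>T"] det_transpose[OF A] assms unfolding orthm_def by auto
  then show ?thesis by (metis mult_cancel_left1 square_eq_1_iff power2_eq_square)
qed

lemma orthm_scalar: assumes "orthm n A" "x \<in> carrier_vec n" "y \<in> carrier_vec n"
  shows "(A *\<^sub>v x) \<bullet> (A *\<^sub>v y) = x \<bullet> y"
proof -
  have A: "A \<in> carrier_mat n n" using assms orthm_def by auto
  have "(A *\<^sub>v y) \<bullet> (A *\<^sub>v x) = (A\<^sup>T *\<^sub>v (A *\<^sub>v y)) \<bullet> x"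
    using transpose_vec_mult_scalar[OF A assms(2), of "A *\<^sub>v y"] A assms by auto
  also have "A\<^sup>T *\<^sub>v (A *\<^sub>v y) = y"
    using orthm_T[OF assms(1)] A assms(3)
    by (metis assoc_mult_mat_vec one_mult_mat_vec transpose_carrier_mat)
  finally show ?thesis using comm_scalar_prod assms A
    by (metis mult_mat_vec_carrier)
qed

lemma SOd_iff: "A \<in> SOd n \<longleftrightarrow> orthm n A \<and> det A = 1"
  unfolding SOd_def orthm_def by auto

lemma map_map_mat: assumes "set P \<subseteq> carrier_vec n" "A \<in> carrier_mat m k" "B \<in> carrier_mat k n"
  shows "map (\<lambda>v. A *\<^sub>v v) (map (\<lambda>v. B *\<^sub>v v) P) = map (\<lambda>v. (A * B) *\<^sub>v v) P"
  using assms by (auto simp: subset_iff)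

lemma cls_refl: assumes "set P \<subseteq> carrier_vec d" shows "P \<in> cls d P"
proof -
  have "map (\<lambda>v. 1\<^sub>m d *\<^sub>v v) P = P" using assms by (auto intro!: map_idI simp: subset_iff)
  then show ?thesis unfolding cls_def using orthm_one[of d] SOd_iff
    by (metis (mono_tags, lifting) det_one mem_Collect_eq)
qed

lemma cls_orth: "orthm d A \<Longrightarrow> det A = 1 \<Longrightarrow> map (\<lambda>v. A *\<^sub>v v) P \<in> cls d P"
  unfolding cls_def SOd_iff by auto

lemma cls_sub: assumes "Q \<in> cls d P" "set P \<subseteq> carrier_vec d" shows "cls d Q \<subseteq> cls d P"
proof
  fix X assume "X \<in> cls d Q"
  then obtain A' where A': "A' \<in> SOd d" "X = map (\<lambda>v. A' *\<^sub>v v) Q" unfolding cls_def by auto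
  obtain A where A: "A \<in> SOd d" "Q = map (\<lambda>v. A *\<^sub>v v) P" using assms unfolding cls_def by auto
  have "X = map (\<lambda>v. (A' * A) *\<^sub>v v) P"
    using A A' assms(2) map_map_mat[of P d A' d d A] unfolding SOd_def by auto
  moreover have "A' * A \<in> SOd d" using A A' orthm_mult unfolding SOd_iff orthm_def
    by (metis det_mult mult_1)
  ultimately show "X \<in> cls d P" unfolding cls_def by auto
qed

lemma cls_eq: assumes "Q \<in> cls d P" "set P \<subseteq> carrier_vec d" shows "cls d Q = cls d P"
proof
  show "cls d Q \<subseteq> cls d P" using cls_sub assms by auto
  obtain A where A: "A \<in> SOd d" "Q = map (\<lambda>v. A *\<^sub>v v) P" using assms unfolding cls_def by auto
  have Ac: "A \<in> carrier_mat d d" using A SOd_def by auto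
  have "map (\<lambda>v. A\<^sup>T *\<^sub>v v) Q = map (\<lambda>v. (A\<^sup>T * A) *\<^sub>v v) P"
    using map_map_mat[of P d "A\<^sup>T" d d A] A assms Ac by auto
  also have "\<dots> = P" using orthm_T[of d A] A SOd_iff assms(2) by (auto intro!: map_idI simp: subset_iff)
  finally have "P \<in> cls d Q" using cls_orth[of d "A\<^sup>T" Q] orthm_transpose A SOd_iff det_transpose[OF Ac] by auto
  moreover have "set Q \<subseteq> carrier_vec d" using A Ac assms(2) by auto
  ultimately show "cls d P \<subseteq> cls d Q" using cls_sub by auto
qed

context vec_space begin

lemma max_indpt_cols: assumes M: "M \<in> carrier_mat n k"
  obtains S where "S \<subseteq> set (cols M)" "lin_indpt S" "card S = rank M"
    "set (cols M) \<subseteq> span S" "finite S"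
proof -
  obtain S where maxS: "maximal S (\<lambda>T. T \<subseteq> set (cols M) \<and> lin_indpt T)"
    using maximal_exists[of "(\<lambda>T. T \<subseteq> set (cols M) \<and> lin_indpt T)" "card (set (cols M))" "{}"]
    by (meson List.finite_set card_mono empty_iff empty_subsetI finite_lin_indpt2 rev_finite_subset)
  have Ssub: "S \<subseteq> set (cols M)" and li: "lin_indpt S" using maxS unfolding maximal_def by auto
  have colsc: "set (cols M) \<subseteq> carrier_vec n" using M cols_dim by blast
  have fin: "finite S" using Ssub finite_subset by blast
  have card: "card S = rank M" using rank_card_indpt[OF M maxS] by simp
  have Sc: "S \<subseteq> carrier_vec n" using Ssub colsc by auto
  have "set (cols M) \<subseteq> span S"
  proof
    fix s assume s: "s \<in> set (cols M)"
    show "s \<in> span S"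
    proof (rule ccontr)
      assume ns: "s \<notin> span S"
      have "s \<notin> S" using ns span_mem[OF Sc] by auto
      have "lin_indpt (S \<union> {s})"
        using lin_dep_iff_in_span[of S s] Sc li ns \<open>s \<notin> S\<close> s colsc by auto
      then have "S \<union> {s} \<subseteq> set (cols M) \<and> lin_indpt (S \<union> {s})" using Ssub s by auto
      then have "S \<union> {s} = S" using maxS unfolding maximal_def by blast
      then show False using \<open>s \<notin> S\<close> by auto
    qed
  qed
  then show ?thesis using that Ssub li card fin by auto
qed

lemma low_rank_orth: assumes M: "M \<in> carrier_mat n k" and r: "rank M < n"
  shows "\<exists>w. w \<in> carrier_vec n \<and> w \<noteq> 0\<^sub>v n \<and> (\<forall>c\<in>set (cols M). w \<bullet> c = 0)"
proof -
  obtain S where S: "S \<subseteq> set (cols M)" "lin_indpt S" "card S = rank M"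
    "set (cols M) \<subseteq> span S" "finite S" using max_indpt_cols[OF M] by blast
  obtain L where L: "set L = S" "distinct L" using finite_distinct_list[OF S(5)] by blast
  have lenL: "length L = card S" using L distinct_card by fastforce
  have colsc: "set (cols M) \<subseteq> carrier_vec n" using M cols_dim by blast
  have Sc: "S \<subseteq> carrier_vec n" using S colsc by auto
  define L2 where "L2 = L @ replicate (n - length L) (0\<^sub>v n)"
  have len2: "length L2 = n" using lenL S r unfolding L2_def by auto
  have L2c: "set L2 \<subseteq> carrier_vec n" using Sc L unfolding L2_def by auto
  define N where "N = mat_of_cols n L2"
  have N: "N \<in> carrier_mat n n" unfolding N_def using len2 by (metis mat_of_cols_carrier(1))
  have lt: "length L < n" using lenL S r by auto
  have colz: "col N (length L) = 0\<^sub>v n"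
    unfolding N_def using lt len2 L2c by (simp add: L2_def nth_append)
  have "N *\<^sub>v unit_vec n (length L) = 0\<^sub>v n"
  proof (rule eq_vecI)
    fix i assume "i < dim_vec (0\<^sub>v n)"
    then have i: "i < n" by auto
    have "(N *\<^sub>v unit_vec n (length L)) $ i = row N i \<bullet> unit_vec n (length L)" using N i by auto
    also have "\<dots> = N $$ (i, length L)" using N i lt by auto
    also have "\<dots> = col N (length L) $ i" using N i lt by auto
    finally show "(N *\<^sub>v unit_vec n (length L)) $ i = 0\<^sub>v n $ i" using colz i by auto
  qed (use N in auto)
  then have "det N = 0" using det_0_iff_vec_prod_zero_field[OF N] lt
    by (metis unit_vec_carrier unit_vec_eq index_unit_vec(1) index_zero_vec(1) less_irrefl zero_neq_one)
  then have "det N\<^sup>T = 0" using det_transpose[OF N] by auto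
  then obtain w where w: "w \<in> carrier_vec n" "w \<noteq> 0\<^sub>v n" "N\<^sup>T *\<^sub>v w = 0\<^sub>v n"
    using det_0_iff_vec_prod_zero_field[of "N\<^sup>T" n] N by auto
  have "\<forall>y\<in>S. w \<bullet> y = 0"
  proof
    fix y assume "y \<in> S"
    then obtain j where j: "j < length L" "L ! j = y" using L by (metis in_set_conv_nth)
    have "(N\<^sup>T *\<^sub>v w) $ j = row N\<^sup>T j \<bullet> w" using N j lt by auto
    also have "row N\<^sup>T j = col N j" using N j lt by auto
    also have "col N j = L2 ! j" unfolding N_def using j len2 L2c lt
      by (intro col_mat_of_cols) (auto simp: L2_def nth_append)
    also have "L2 ! j = y" using j unfolding L2_def by (simp add: nth_append)
    finally have "y \<bullet> w = 0" using w j lt by auto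
    then show "w \<bullet> y = 0" using comm_scalar_prod[of y n w] w \<open>y \<in> S\<close> Sc by auto
  qed
  then have "w \<in> orthogonal_complement S" unfolding orthogonal_complement_def using w by auto
  then have "w \<in> orthogonal_complement (span S)" using in_orthogonal_complement_span[OF Sc] by auto
  then have "\<forall>c\<in>set (cols M). w \<bullet> c = 0" using S(4) unfolding orthogonal_complement_def by auto
  then show ?thesis using w by auto
qed

lemma orth_low_rank: assumes M: "M \<in> carrier_mat n k" and w: "w \<in> carrier_vec n" "w \<noteq> 0\<^sub>v n"
  and o: "\<forall>c\<in>set (cols M). w \<bullet> c = 0"
  shows "rank M < n"
proof (rule ccontr)
  assume "\<not> rank M < n"
  obtain S where S: "S \<subseteq> set (cols M)" "lin_indpt S" "card S = rank M"
    "set (cols M) \<subseteq> span S" "finite S" using max_indpt_cols[OF M] by blast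
  have colsc: "set (cols M) \<subseteq> carrier_vec n" using M cols_dim by blast
  have Sc: "S \<subseteq> carrier_vec n" using S colsc by auto
  have "card S \<le> n" using li_le_dim(2)[OF fin_dim _ S(2)] Sc dim_is_n by auto
  then have cS: "card S = n" using S \<open>\<not> rank M < n\<close> by auto
  obtain L where L: "set L = S" "distinct L" using finite_distinct_list[OF S(5)] by blast
  have lenL: "length L = n" using L distinct_card cS by fastforce
  define N where "N = mat_of_cols n L"
  have N: "N \<in> carrier_mat n n" unfolding N_def using lenL by (metis mat_of_cols_carrier(1))
  have cN: "cols N = L" unfolding N_def using L Sc by auto
  have "rank N = n" using lin_indpt_full_rank[OF N] cN L S by auto
  then have "det N \<noteq> 0" using det_rank_iff[OF N] by auto
  then have dT: "det N\<^sup>T \<noteq> 0" using det_transpose[OF N] by auto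
  have "N\<^sup>T *\<^sub>v w = 0\<^sub>v n"
  proof (rule eq_vecI)
    fix j assume "j < dim_vec (0\<^sub>v n)"
    then have j: "j < n" by auto
    have "(N\<^sup>T *\<^sub>v w) $ j = row N\<^sup>T j \<bullet> w" using N j by auto
    also have "row N\<^sup>T j = col N j" using N j by auto
    also have "col N j = L ! j" using cN N j by (metis cols_length cols_nth carrier_matD(2))
    also have "L ! j \<bullet> w = w \<bullet> L ! j" using comm_scalar_prod[of "L ! j" n w] w Sc L j lenL
      by (metis nth_mem subsetD)
    also have "\<dots> = 0" using o S L j lenL by (metis nth_mem subsetD)
    finally show "(N\<^sup>T *\<^sub>v w) $ j = 0\<^sub>v n $ j" using j by auto
  qed (use N in auto)
  then show False using det_0_iff_vec_prod_zero_field[of "N\<^sup>T" n] N w dT by auto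
qed

end

lemma self_scalar_nonneg: "0 \<le> (v :: real vec) \<bullet> v"
  unfolding scalar_prod_def by (auto intro!: sum_nonneg)

lemma self_scalar_zero: assumes "(v :: real vec) \<in> carrier_vec n" "v \<bullet> v = 0" shows "v = 0\<^sub>v n"
proof (rule eq_vecI)
  have "(\<Sum>i\<in>{0..<dim_vec v}. v $ i * v $ i) = 0" using assms(2) unfolding scalar_prod_def by auto
  then have "\<forall>i\<in>{0..<dim_vec v}. v $ i * v $ i = 0"
    by (subst sum_nonneg_eq_0_iff[symmetric]) auto
  then show "\<And>i. i < dim_vec (0\<^sub>v n) \<Longrightarrow> v $ i = 0\<^sub>v n $ i" using assms by auto
qed (use assms in auto)

lemma mat_eq_action: fixes A B :: "real mat" assumes "A \<in> carrier_mat n m" "B \<in> carrier_mat n m"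
  and "\<And>x. x \<in> carrier_vec m \<Longrightarrow> A *\<^sub>v x = B *\<^sub>v x" shows "A = B"
proof (rule eq_matI)
  fix i j assume ij: "i < dim_row B" "j < dim_col B"
  have "A *\<^sub>v unit_vec m j = B *\<^sub>v unit_vec m j" using assms by auto
  then have "(A *\<^sub>v unit_vec m j) $ i = (B *\<^sub>v unit_vec m j) $ i" by simp
  moreover have "(C *\<^sub>v unit_vec m j) $ i = C $$ (i, j)" if C: "C \<in> carrier_mat n m" for C :: "real mat"
  proof -
    have "(C *\<^sub>v unit_vec m j) $ i = row C i \<bullet> unit_vec m j" using C ij assms by auto
    also have "\<dots> = row C i $ j" using ij assms by (intro scalar_prod_right_unit) auto
    finally show ?thesis using C ij assms by auto
  qed
  ultimately show "A $$ (i, j) = B $$ (i, j)" using assms by metis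
qed (use assms in auto)

definition outer :: "real vec \<Rightarrow> real mat" where
  "outer z = mat (dim_vec z) (dim_vec z) (\<lambda>(i,j). z $ i * z $ j)"

definition house :: "real vec \<Rightarrow> real mat" where
  "house z = 1\<^sub>m (dim_vec z) - (2 / (z \<bullet> z)) \<cdot>\<^sub>m outer z"

lemma outer_carrier: "z \<in> carrier_vec m \<Longrightarrow> outer z \<in> carrier_mat m m"
  unfolding outer_def by auto

lemma house_carrier: "z \<in> carrier_vec m \<Longrightarrow> house z \<in> carrier_mat m m"
  unfolding house_def by (rule minus_carrier_mat, rule smult_carrier_mat, rule outer_carrier)

lemma outer_mult_vec: assumes "z \<in> carrier_vec m" "y \<in> carrier_vec m"
  shows "outer z *\<^sub>v y = (z \<bullet> y) \<cdot>\<^sub>v z"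
proof (rule eq_vecI)
  fix i assume "i < dim_vec ((z \<bullet> y) \<cdot>\<^sub>v z)"
  then have i: "i < m" using assms by auto
  have "(outer z *\<^sub>v y) $ i = (\<Sum>j = 0..<m. z $ i * z $ j * y $ j)"
    unfolding outer_def using assms i by (auto simp: scalar_prod_def)
  also have "\<dots> = z $ i * (\<Sum>j = 0..<m. z $ j * y $ j)"
    by (simp add: sum_distrib_left mult.assoc)
  finally show "(outer z *\<^sub>v y) $ i = ((z \<bullet> y) \<cdot>\<^sub>v z) $ i"
    using assms i by (auto simp: scalar_prod_def)
qed (use assms outer_carrier in auto)

lemma house_mult_vec: assumes "z \<in> carrier_vec m" "y \<in> carrier_vec m"
  shows "house z *\<^sub>v y = y - ((2 / (z \<bullet> z)) * (z \<bullet> y)) \<cdot>\<^sub>v z"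
proof -
  have "house z *\<^sub>v y = 1\<^sub>m m *\<^sub>v y - ((2 / (z \<bullet> z)) \<cdot>\<^sub>m outer z) *\<^sub>v y"
    unfolding house_def using assms outer_carrier[OF assms(1)]
    by (subst minus_mult_distrib_mat_vec) auto
  also have "((2 / (z \<bullet> z)) \<cdot>\<^sub>m outer z) *\<^sub>v y = (2 / (z \<bullet> z)) \<cdot>\<^sub>v (outer z *\<^sub>v y)"
    using assms outer_carrier[OF assms(1)] by (auto simp: mult_mat_vec)
  finally show ?thesis using assms outer_mult_vec[OF assms] by (auto simp: smult_smult_assoc)
qed

lemma house_transpose: assumes "z \<in> carrier_vec m" shows "(house z)\<^sup>T = house z"
  unfolding house_def outer_def using assms by (intro eq_matI) auto

lemma house_invol: assumes z: "z \<in> carrier_vec m" and y: "y \<in> carrier_vec m"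
  shows "house z *\<^sub>v (house z *\<^sub>v y) = y"
proof (cases "z \<bullet> z = 0")
  case True
  have "house z *\<^sub>v w = w" if w: "w \<in> carrier_vec m" for w
    using house_mult_vec[OF z w] True by (intro eq_vecI) (use w z in auto)
  then show ?thesis using y house_carrier[OF z] by simp
next
  case False
  define c where "c = 2 / (z \<bullet> z)"
  have hy: "house z *\<^sub>v y = y - (c * (z \<bullet> y)) \<cdot>\<^sub>v z" using house_mult_vec[OF z y] c_def by simp
  have "z \<bullet> (house z *\<^sub>v y) = z \<bullet> y - c * (z \<bullet> y) * (z \<bullet> z)"
    unfolding hy using z y by (simp add: scalar_prod_minus_distrib)
  also have "\<dots> = - (z \<bullet> y)" using False unfolding c_def by (simp add: field_simps)
  finally have zh: "z \<bullet> (house z *\<^sub>v y) = - (z \<bullet> y)" .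
  have "house z *\<^sub>v (house z *\<^sub>v y) = (house z *\<^sub>v y) - (c * (z \<bullet> (house z *\<^sub>v y))) \<cdot>\<^sub>v z"
    using house_mult_vec[OF z, of "house z *\<^sub>v y"] c_def house_carrier[OF z] y by auto
  also have "\<dots> = (y - (c * (z \<bullet> y)) \<cdot>\<^sub>v z) - (c * (- (z \<bullet> y))) \<cdot>\<^sub>v z"
    using zh hy by simp
  also have "\<dots> = y"
    by (rule eq_vecI) (use z y in auto)
  finally show ?thesis .
qed

lemma house_orthm: assumes z: "z \<in> carrier_vec m" shows "orthm m (house z)"
proof -
  have H: "house z \<in> carrier_mat m m" using house_carrier[OF z] .
  have "house z * house z = 1\<^sub>m m"
    by (rule mat_eq_action[of _ m m]) (use H house_invol[OF z] in auto)
  then show ?thesis unfolding orthm_def using house_transpose[OF z] H by auto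
qed

lemma house_unit: assumes a: "a \<in> carrier_vec m" and b: "b \<in> carrier_vec m"
  and aa: "a \<bullet> a = 1" and bb: "b \<bullet> b = 1"
  shows "house (a - b) *\<^sub>v a = b"
proof -
  define z where "z = a - b"
  have z: "z \<in> carrier_vec m" using a b z_def by auto
  have ba: "b \<bullet> a = a \<bullet> b" using comm_scalar_prod[OF a b] by simp
  have za: "z \<bullet> a = 1 - a \<bullet> b" unfolding z_def using a b aa
    by (simp add: minus_scalar_prod_distrib ba)
  have zz: "z \<bullet> z = 2 - 2 * (a \<bullet> b)" unfolding z_def using a b aa bb
    by (simp add: minus_scalar_prod_distrib scalar_prod_minus_distrib ba)
  show ?thesis
  proof (cases "z \<bullet> z = 0")
    case True
    then have "z = 0\<^sub>v m" using self_scalar_zero z by auto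
    then have "a = b" unfolding z_def using a b
    proof (intro eq_vecI)
      fix i assume "i < dim_vec b"
      then have "(a - b) $ i = 0" using \<open>z = 0\<^sub>v m\<close> b unfolding z_def by auto
      then show "a $ i = b $ i" using \<open>i < dim_vec b\<close> a b by auto
    qed (use a b in auto)
    then show ?thesis using house_mult_vec[OF z a] True unfolding z_def using a
      by (intro eq_vecI) auto
  next
    case False
    have "(2 / (z \<bullet> z)) * (z \<bullet> a) = 1" using False unfolding za zz by (simp add: field_simps)
    then show ?thesis using house_mult_vec[OF z a] unfolding z_def
      by (intro eq_vecI) (use a b in auto)
  qed
qed

lemma house_fix: assumes a: "a \<in> carrier_vec m" and b: "b \<in> carrier_vec m" and y: "y \<in> carrier_vec m"
  and "a \<bullet> y = 0" "b \<bullet> y = 0"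
  shows "house (a - b) *\<^sub>v y = y"
proof -
  have "(a - b) \<bullet> y = 0" using assms by (simp add: minus_scalar_prod_distrib)
  then show ?thesis using house_mult_vec[of "a - b" m y] a b y by auto
qed

definition Rm :: "nat \<Rightarrow> real mat" where "Rm d = multrow_mat d 0 (-1)"

lemma Rm_carrier: "Rm d \<in> carrier_mat d d" unfolding Rm_def multrow_mat_def by auto

lemma Rm_row: assumes "i < d" shows "row (Rm d) i = (if i = 0 then -1 else 1) \<cdot>\<^sub>v unit_vec d i"
  by (rule eq_vecI) (use assms in \<open>auto simp: Rm_def multrow_mat_def unit_vec_def\<close>)

lemma Rm_action: assumes v: "v \<in> carrier_vec d" and i: "i < d"
  shows "(Rm d *\<^sub>v v) $ i = (if i = 0 then - v $ i else v $ i)"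
proof -
  have "(Rm d *\<^sub>v v) $ i = row (Rm d) i \<bullet> v" using Rm_carrier[of d] i
    by (metis carrier_matD(1) index_mult_mat_vec)
  also have "\<dots> = (if i = 0 then -1 else 1) * (unit_vec d i \<bullet> v)" unfolding Rm_row[OF i]
    using v by auto
  also have "\<dots> = (if i = 0 then - v $ i else v $ i)" using v i by auto
  finally show ?thesis .
qed

lemma Rm_fix: assumes v: "v \<in> carrier_vec d" "v $ 0 = 0" shows "Rm d *\<^sub>v v = v"
  by (rule eq_vecI) (use assms Rm_carrier Rm_action[OF v(1)] in auto)

lemma Rm_orthm: "orthm d (Rm d)"
proof -
  have T: "(Rm d)\<^sup>T = Rm d" unfolding Rm_def multrow_mat_def by (intro eq_matI) auto
  have "Rm d * Rm d = 1\<^sub>m d"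
  proof (rule mat_eq_action[of _ d d])
    fix x :: "real vec" assume x: "x \<in> carrier_vec d"
    have "(Rm d * Rm d) *\<^sub>v x = Rm d *\<^sub>v (Rm d *\<^sub>v x)" using assoc_mult_mat_vec[OF Rm_carrier Rm_carrier x] .
    also have "\<dots> = x"
    proof (rule eq_vecI)
      fix i assume "i < dim_vec x"
      then have i: "i < d" using x by auto
      have c: "Rm d *\<^sub>v x \<in> carrier_vec d" using Rm_carrier[of d] x by auto
      show "(Rm d *\<^sub>v (Rm d *\<^sub>v x)) $ i = x $ i"
        using Rm_action[OF c i] Rm_action[OF x i] by auto
    qed (use x Rm_carrier[of d] in auto)
    finally show "(Rm d * Rm d) *\<^sub>v x = 1\<^sub>m d *\<^sub>v x" using x by auto
  qed (use mult_carrier_mat[OF Rm_carrier Rm_carrier] in auto)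
  then show ?thesis unfolding orthm_def using T Rm_carrier by auto
qed

lemma Rm_det: "d \<ge> 1 \<Longrightarrow> det (Rm d) = -1"
  unfolding Rm_def by (rule det_multrow_mat) auto

lemma refl_exists: assumes m: "m \<ge> 1" and w: "w \<in> carrier_vec m" and ww: "w \<bullet> w = 1"
  shows "\<exists>F. orthm m F \<and> det F = -1 \<and> (\<forall>y\<in>carrier_vec m. w \<bullet> y = 0 \<longrightarrow> F *\<^sub>v y = y)"
proof -
  define e where "e = (unit_vec m 0 :: real vec)"
  have e: "e \<in> carrier_vec m" "e \<bullet> e = 1" unfolding e_def using m by auto
  define H where "H = house (e - w)"
  have Hc: "H \<in> carrier_mat m m" unfolding H_def using house_carrier e w by auto
  have Ho: "orthm m H" unfolding H_def using house_orthm e w by auto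
  have HT: "H\<^sup>T = H" unfolding H_def using house_transpose[of "e - w" m] e w by auto
  have He: "H *\<^sub>v e = w" unfolding H_def using house_unit e w ww by auto
  define F where "F = H * Rm m * H"
  have Fo: "orthm m F" unfolding F_def using orthm_mult Ho Rm_orthm by auto
  have "det F = det H * det (Rm m) * det H" unfolding F_def using Hc Rm_carrier
    by (metis det_mult mult_carrier_mat)
  moreover have "det H * det H = 1" using orthm_det[OF Ho] by auto
  ultimately have dF: "det F = -1" using Rm_det[OF m] by (metis mult.commute mult_minus1 mult.assoc)
  have "F *\<^sub>v y = y" if y: "y \<in> carrier_vec m" "w \<bullet> y = 0" for y
  proof -
    have "F *\<^sub>v y = H *\<^sub>v (Rm m *\<^sub>v (H *\<^sub>v y))" unfolding F_def using Hc Rm_carrier y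
      by (metis assoc_mult_mat_vec mult_carrier_mat mult_mat_vec_carrier)
    moreover have "e \<bullet> (H *\<^sub>v y) = 0" using transpose_vec_mult_scalar[OF Hc y(1) e(1)] HT He y by simp
    moreover have "(H *\<^sub>v y) $ 0 = e \<bullet> (H *\<^sub>v y)" unfolding e_def using Hc y m by auto
    moreover have "H *\<^sub>v (H *\<^sub>v y) = y" unfolding H_def using house_invol[of "e - w" m y] e w y by auto
    moreover have "H *\<^sub>v y \<in> carrier_vec m" using Hc y by auto
    ultimately show ?thesis using Rm_fix[of "H *\<^sub>v y" m] by auto
  qed
  then show ?thesis using Fo dF by auto
qed

lemma u_exists: fixes B :: "real mat" assumes B: "B \<in> carrier_mat (d+1) d"
  shows "\<exists>u. u \<in> carrier_vec (d+1) \<and> u \<bullet> u = 1 \<and> B\<^sup>T *\<^sub>v u = 0\<^sub>v d"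
proof -
  interpret vs: vec_space "TYPE(real)" "d+1" .
  have "vs.rank B \<le> d" using vs.rank_le_nc[OF B] .
  then obtain w where w: "w \<in> carrier_vec (d+1)" "w \<noteq> 0\<^sub>v (d+1)" "\<forall>c\<in>set (cols B). w \<bullet> c = 0"
    using vs.low_rank_orth[OF B] by auto
  have "w \<bullet> w \<noteq> 0" using self_scalar_zero w by auto
  then have pos: "w \<bullet> w > 0" using self_scalar_nonneg[of w] by auto
  define s where "s = sqrt (w \<bullet> w)"
  have s: "s > 0" "s * s = w \<bullet> w" using pos unfolding s_def by auto
  define u where "u = (1 / s) \<cdot>\<^sub>v w"
  have u: "u \<in> carrier_vec (d+1)" unfolding u_def using w by auto
  have "u \<bullet> u = (1/s) * (1/s) * (w \<bullet> w)" unfolding u_def using w by auto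
  also have "\<dots> = 1" unfolding s(2)[symmetric] using s(1) by (simp add: field_simps)
  finally have uu: "u \<bullet> u = 1" .
  have "B\<^sup>T *\<^sub>v u = 0\<^sub>v d"
  proof (rule eq_vecI)
    fix j assume "j < dim_vec (0\<^sub>v d)"
    then have j: "j < d" by auto
    have "(B\<^sup>T *\<^sub>v u) $ j = col B j \<bullet> u" using B j by auto
    also have "\<dots> = u \<bullet> col B j" using comm_scalar_prod[of "col B j" "d+1" u] u B j by auto
    also have "\<dots> = (1/s) * (w \<bullet> col B j)" unfolding u_def using w B j by auto
    also have "w \<bullet> col B j = 0" using w(3) B j by (metis carrier_matD(2) cols_length cols_nth nth_mem)
    finally show "(B\<^sup>T *\<^sub>v u) $ j = 0\<^sub>v d $ j" using j by auto
  qed (use B in auto)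
  then show ?thesis using u uu by auto
qed

lemma u_perp: fixes B :: "real mat" and u x :: "real vec" assumes B: "B \<in> carrier_mat (d+1) d" and u: "u \<in> carrier_vec (d+1)"
  and Bu: "B\<^sup>T *\<^sub>v u = 0\<^sub>v d" and x: "x \<in> carrier_vec d"
  shows "u \<bullet> (B *\<^sub>v x) = 0"
  using transpose_vec_mult_scalar[OF B x u] Bu x by auto

lemma decomp: fixes B :: "real mat" and u y :: "real vec" assumes B: "B \<in> carrier_mat (d+1) d" and BB: "B\<^sup>T * B = 1\<^sub>m d"
  and u: "u \<in> carrier_vec (d+1)" and uu: "u \<bullet> u = 1" and Bu: "B\<^sup>T *\<^sub>v u = 0\<^sub>v d"
  and y: "y \<in> carrier_vec (d+1)"
  shows "B *\<^sub>v (B\<^sup>T *\<^sub>v y) + (u \<bullet> y) \<cdot>\<^sub>v u = y"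
proof -
  define W where "W = mat (d+1) (d+1) (\<lambda>(i,j). if j < d then B $$ (i,j) else u $ i)"
  have Wc: "W \<in> carrier_mat (d+1) (d+1)" unfolding W_def by auto
  have colW: "col W j = (if j < d then col B j else u)" if j: "j < d+1" for j
    by (rule eq_vecI) (use j B u in \<open>auto simp: W_def\<close>)
  have uB: "u \<bullet> col B j = 0" "col B j \<bullet> u = 0" if j: "j < d" for j
  proof -
    have "(B\<^sup>T *\<^sub>v u) $ j = col B j \<bullet> u" using B j by auto
    then show "col B j \<bullet> u = 0" using Bu j by auto
    then show "u \<bullet> col B j = 0" using comm_scalar_prod[of "col B j" "d+1" u] u B j by auto
  qed
  have BBij: "col B i \<bullet> col B j = (if i = j then 1 else 0)" if "i < d" "j < d" for i j
  proof -
    have "(B\<^sup>T * B) $$ (i,j) = col B i \<bullet> col B j" using B that by auto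
    then show ?thesis using BB that by auto
  qed
  have "W\<^sup>T * W = 1\<^sub>m (d+1)"
  proof (rule eq_matI)
    fix i j assume ij: "i < dim_row (1\<^sub>m (d+1))" "j < dim_col (1\<^sub>m (d+1))"
    then have i: "i < d+1" and j: "j < d+1" by auto
    have "(W\<^sup>T * W) $$ (i,j) = col W i \<bullet> col W j" using Wc i j by auto
    also have "\<dots> = 1\<^sub>m (d+1) $$ (i,j)" unfolding colW[OF i] colW[OF j]
      using i j uB BBij uu by auto
    finally show "(W\<^sup>T * W) $$ (i,j) = 1\<^sub>m (d+1) $$ (i,j)" .
  qed (use Wc in auto)
  then have WW: "W * W\<^sup>T = 1\<^sub>m (d+1)"
    using mat_mult_left_right_inverse[of "W\<^sup>T" "d+1" W] Wc by auto
  have "y = W *\<^sub>v (W\<^sup>T *\<^sub>v y)" using WW Wc y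
    by (metis assoc_mult_mat_vec one_mult_mat_vec transpose_carrier_mat)
  also have "\<dots> = B *\<^sub>v (B\<^sup>T *\<^sub>v y) + (u \<bullet> y) \<cdot>\<^sub>v u"
  proof (rule eq_vecI)
    fix i assume "i < dim_vec (B *\<^sub>v (B\<^sup>T *\<^sub>v y) + (u \<bullet> y) \<cdot>\<^sub>v u)"
    then have i: "i < d+1" using u by auto
    have "(W *\<^sub>v (W\<^sup>T *\<^sub>v y)) $ i = (\<Sum>j<d+1. W $$ (i,j) * (col W j \<bullet> y))"
      using Wc i y by (auto simp: scalar_prod_def atLeast0LessThan)
    also have "\<dots> = (\<Sum>j<d. B $$ (i,j) * (col B j \<bullet> y)) + u $ i * (u \<bullet> y)"
      using i colW by (simp add: W_def)
    also have "(\<Sum>j<d. B $$ (i,j) * (col B j \<bullet> y)) = (B *\<^sub>v (B\<^sup>T *\<^sub>v y)) $ i"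
      using B i y by (auto simp: scalar_prod_def atLeast0LessThan)
    finally show "(W *\<^sub>v (W\<^sup>T *\<^sub>v y)) $ i = (B *\<^sub>v (B\<^sup>T *\<^sub>v y) + (u \<bullet> y) \<cdot>\<^sub>v u) $ i"
      using i B u y by auto
  qed (use Wc B u in auto)
  finally show ?thesis by simp
qed

lemma orthm_act1: assumes "orthm n A" "x \<in> carrier_vec n" shows "A\<^sup>T *\<^sub>v (A *\<^sub>v x) = x"
proof -
  have A: "A \<in> carrier_mat n n" using assms orthm_def by auto
  have "A\<^sup>T *\<^sub>v (A *\<^sub>v x) = (A\<^sup>T * A) *\<^sub>v x" using A assms by (metis assoc_mult_mat_vec transpose_carrier_mat)
  then show ?thesis using orthm_T[OF assms(1)] assms by auto
qed

lemma orthm_act2: assumes "orthm n A" "x \<in> carrier_vec n" shows "A *\<^sub>v (A\<^sup>T *\<^sub>v x) = x"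
  using orthm_act1[OF orthm_transpose[OF assms(1)] assms(2)] by simp

lemma orthm_of_act: assumes A: "A \<in> carrier_mat n n" and act: "\<And>x. x \<in> carrier_vec n \<Longrightarrow> A\<^sup>T *\<^sub>v (A *\<^sub>v x) = x"
  shows "orthm n A"
proof -
  have "A\<^sup>T * A = 1\<^sub>m n"
  proof (rule mat_eq_action[of _ n n])
    fix x :: "real vec" assume x: "x \<in> carrier_vec n"
    have "(A\<^sup>T * A) *\<^sub>v x = A\<^sup>T *\<^sub>v (A *\<^sub>v x)"
      by (rule assoc_mult_mat_vec) (use A x in auto)
    then show "(A\<^sup>T * A) *\<^sub>v x = 1\<^sub>m n *\<^sub>v x" using act[OF x] x by auto
  qed (use A in auto)
  then have "A * A\<^sup>T = 1\<^sub>m n" using mat_mult_left_right_inverse[of "A\<^sup>T" n A] A by auto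
  then show ?thesis using A unfolding orthm_def by auto
qed

lemma BtB: fixes B :: "real mat" assumes B: "B \<in> carrier_mat (d+1) d" and BB: "B\<^sup>T * B = 1\<^sub>m d" and x: "x \<in> carrier_vec d"
  shows "B\<^sup>T *\<^sub>v (B *\<^sub>v x) = x"
proof -
  have "B\<^sup>T *\<^sub>v (B *\<^sub>v x) = (B\<^sup>T * B) *\<^sub>v x"
    by (rule assoc_mult_mat_vec[symmetric]) (use B x in auto)
  then show ?thesis using BB x by auto
qed

lemma lift_orth:
  fixes B :: "real mat" and u :: "real vec"
  assumes B: "B \<in> carrier_mat (d+1) d" and BB: "B\<^sup>T * B = 1\<^sub>m d"
  and u: "u \<in> carrier_vec (d+1)" and uu: "u \<bullet> u = 1" and Bu: "B\<^sup>T *\<^sub>v u = 0\<^sub>v d"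
  and Om: "orthm d Om"
  shows "\<exists>A. A \<in> SOd (d+1) \<and> (\<forall>x\<in>carrier_vec d. A *\<^sub>v (B *\<^sub>v x) = B *\<^sub>v (Om *\<^sub>v x))"
proof -
  have Omc: "Om \<in> carrier_mat d d" using Om orthm_def by auto
  have OmT: "orthm d Om\<^sup>T" using orthm_transpose[OF Om] .
  have gen: "(B * C * B\<^sup>T + outer u) *\<^sub>v y = B *\<^sub>v (C *\<^sub>v (B\<^sup>T *\<^sub>v y)) + (u \<bullet> y) \<cdot>\<^sub>v u"
    if C: "C \<in> carrier_mat d d" and y: "y \<in> carrier_vec (d+1)" for C y
  proof -
    have "(B * C * B\<^sup>T + outer u) *\<^sub>v y = (B * C * B\<^sup>T) *\<^sub>v y + outer u *\<^sub>v y"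
      using B C y outer_carrier[OF u] by (intro add_mult_distrib_mat_vec) auto
    also have "(B * C * B\<^sup>T) *\<^sub>v y = (B * C) *\<^sub>v (B\<^sup>T *\<^sub>v y)"
      by (rule assoc_mult_mat_vec) (use B C y in auto)
    also have "\<dots> = B *\<^sub>v (C *\<^sub>v (B\<^sup>T *\<^sub>v y))"
      by (rule assoc_mult_mat_vec) (use B C y in auto)
    finally show ?thesis using outer_mult_vec[OF u y] by simp
  qed
  define A0 where "A0 = B * Om * B\<^sup>T + outer u"
  have A0c: "A0 \<in> carrier_mat (d+1) (d+1)" unfolding A0_def using B Omc outer_carrier[OF u] by auto
  have outerT: "(outer u)\<^sup>T = outer u" unfolding outer_def by (intro eq_matI) auto
  have A0T: "A0\<^sup>T = B * Om\<^sup>T * B\<^sup>T + outer u"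
  proof -
    have c1: "B * Om * B\<^sup>T \<in> carrier_mat (d+1) (d+1)" using B Omc by auto
    have "A0\<^sup>T = (B * Om * B\<^sup>T)\<^sup>T + (outer u)\<^sup>T" unfolding A0_def
      by (rule transpose_add[OF c1 outer_carrier[OF u]])
    also have "(B * Om * B\<^sup>T)\<^sup>T = (B\<^sup>T)\<^sup>T * (B * Om)\<^sup>T"
      by (rule transpose_mult) (use B Omc in auto)
    also have "(B * Om)\<^sup>T = Om\<^sup>T * B\<^sup>T"
      by (rule transpose_mult) (use B Omc in auto)
    also have "(B\<^sup>T)\<^sup>T * (Om\<^sup>T * B\<^sup>T) = B * Om\<^sup>T * B\<^sup>T"
      using assoc_mult_mat[of B "d+1" d "Om\<^sup>T" d "B\<^sup>T" "d+1"] B Omc by auto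
    finally show ?thesis using outerT by simp
  qed
  have uBx: "u \<bullet> (B *\<^sub>v x) = 0" if "x \<in> carrier_vec d" for x using u_perp[OF B u Bu that] .
  have A0B: "A0 *\<^sub>v (B *\<^sub>v x) = B *\<^sub>v (Om *\<^sub>v x)" if x: "x \<in> carrier_vec d" for x
  proof -
    have "A0 *\<^sub>v (B *\<^sub>v x) = B *\<^sub>v (Om *\<^sub>v (B\<^sup>T *\<^sub>v (B *\<^sub>v x))) + (u \<bullet> (B *\<^sub>v x)) \<cdot>\<^sub>v u"
      unfolding A0_def using gen[OF Omc] B x by auto
    also have "\<dots> = B *\<^sub>v (Om *\<^sub>v x) + 0 \<cdot>\<^sub>v u" using BtB[OF B BB x] uBx[OF x] by simp
    also have "\<dots> = B *\<^sub>v (Om *\<^sub>v x)" by (rule eq_vecI) (use B Omc x u in auto)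
    finally show ?thesis .
  qed
  have A0o: "orthm (d+1) A0"
  proof (rule orthm_of_act[OF A0c])
    fix y :: "real vec" assume y: "y \<in> carrier_vec (d+1)"
    define z where "z = Om *\<^sub>v (B\<^sup>T *\<^sub>v y)"
    have z: "z \<in> carrier_vec d" unfolding z_def using Omc B y by auto
    have v: "A0 *\<^sub>v y = B *\<^sub>v z + (u \<bullet> y) \<cdot>\<^sub>v u" unfolding A0_def z_def using gen[OF Omc y] .
    have vc: "B *\<^sub>v z + (u \<bullet> y) \<cdot>\<^sub>v u \<in> carrier_vec (d+1)" using B z u by auto
    have "B\<^sup>T *\<^sub>v (B *\<^sub>v z + (u \<bullet> y) \<cdot>\<^sub>v u) = B\<^sup>T *\<^sub>v (B *\<^sub>v z) + B\<^sup>T *\<^sub>v ((u \<bullet> y) \<cdot>\<^sub>v u)"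
      using B z u by (intro mult_add_distrib_mat_vec) auto
    also have "B\<^sup>T *\<^sub>v ((u \<bullet> y) \<cdot>\<^sub>v u) = (u \<bullet> y) \<cdot>\<^sub>v (B\<^sup>T *\<^sub>v u)" using B u by (auto simp: mult_mat_vec)
    also have "\<dots> = 0\<^sub>v d" using Bu by auto
    finally have Btv: "B\<^sup>T *\<^sub>v (B *\<^sub>v z + (u \<bullet> y) \<cdot>\<^sub>v u) = z"
      using BtB[OF B BB z] z by auto
    have "u \<bullet> (B *\<^sub>v z + (u \<bullet> y) \<cdot>\<^sub>v u) = u \<bullet> (B *\<^sub>v z) + u \<bullet> ((u \<bullet> y) \<cdot>\<^sub>v u)"
      using B z u by (intro scalar_prod_add_distrib[of _ "d+1"]) auto
    also have "\<dots> = u \<bullet> y" using uBx[OF z] uu u by auto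
    finally have uv: "u \<bullet> (B *\<^sub>v z + (u \<bullet> y) \<cdot>\<^sub>v u) = u \<bullet> y" .
    have "A0\<^sup>T *\<^sub>v (A0 *\<^sub>v y) = B *\<^sub>v (Om\<^sup>T *\<^sub>v z) + (u \<bullet> y) \<cdot>\<^sub>v u"
      unfolding A0T v using gen[of "Om\<^sup>T", OF _ vc] Omc Btv uv by auto
    also have "Om\<^sup>T *\<^sub>v z = B\<^sup>T *\<^sub>v y" unfolding z_def using orthm_act1[OF Om] B y by auto
    also have "B *\<^sub>v (B\<^sup>T *\<^sub>v y) + (u \<bullet> y) \<cdot>\<^sub>v u = y" using decomp[OF B BB u uu Bu y] .
    finally show "A0\<^sup>T *\<^sub>v (A0 *\<^sub>v y) = y" .
  qed
  show ?thesis
  proof (cases "det A0 = 1")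
    case True
    then show ?thesis using A0o A0B SOd_iff by auto
  next
    case False
    then have dA0: "det A0 = -1" using orthm_det[OF A0o] by auto
    obtain F where F: "orthm (d+1) F" "det F = -1" "\<forall>y\<in>carrier_vec (d+1). u \<bullet> y = 0 \<longrightarrow> F *\<^sub>v y = y"
      using refl_exists[of "d+1" u] u uu by auto
    have Fc: "F \<in> carrier_mat (d+1) (d+1)" using F orthm_def by auto
    have "orthm (d+1) (A0 * F)" using orthm_mult A0o F by auto
    moreover have "det (A0 * F) = 1" using det_mult[OF A0c Fc] dA0 F by auto
    moreover have "(A0 * F) *\<^sub>v (B *\<^sub>v x) = B *\<^sub>v (Om *\<^sub>v x)" if x: "x \<in> carrier_vec d" for x
    proof -
      have "(A0 * F) *\<^sub>v (B *\<^sub>v x) = A0 *\<^sub>v (F *\<^sub>v (B *\<^sub>v x))" using A0c Fc B x by auto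
      also have "F *\<^sub>v (B *\<^sub>v x) = B *\<^sub>v x" using F(3) uBx[OF x] B x by auto
      finally show ?thesis using A0B[OF x] by simp
    qed
    ultimately show ?thesis using SOd_iff by auto
  qed
qed

lemma descend_orth:
  fixes B A :: "real mat" and u :: "real vec" and P Q :: "real vec list"
  assumes B: "B \<in> carrier_mat (d+1) d" and BB: "B\<^sup>T * B = 1\<^sub>m d"
  and u: "u \<in> carrier_vec (d+1)" and uu: "u \<bullet> u = 1" and Bu: "B\<^sup>T *\<^sub>v u = 0\<^sub>v d"
  and A: "orthm (d+1) A"
  and P: "set P \<subseteq> carrier_vec d" and Q: "set Q \<subseteq> carrier_vec d"
  and eq: "map (\<lambda>v. A *\<^sub>v (B *\<^sub>v v)) P = map (\<lambda>v. B *\<^sub>v v) Q"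
  shows "\<exists>Om. orthm d Om \<and> Q = map (\<lambda>v. Om *\<^sub>v v) P"
proof -
  have Ac: "A \<in> carrier_mat (d+1) (d+1)" using A orthm_def by auto
  have len: "length Q = length P" using eq by (metis length_map)
  have pq: "A *\<^sub>v (B *\<^sub>v (P ! i)) = B *\<^sub>v (Q ! i)" if i: "i < length P" for i
    using arg_cong[OF eq, of "\<lambda>xs. xs ! i"] i len by auto
  define v where "v = A\<^sup>T *\<^sub>v u"
  have vc: "v \<in> carrier_vec (d+1)" unfolding v_def using Ac u by auto
  have vv: "v \<bullet> v = 1" unfolding v_def using orthm_scalar[OF orthm_transpose[OF A] u u] uu by simp
  have Av: "A *\<^sub>v v = u" unfolding v_def using orthm_act2[OF A u] .
  define H where "H = house (u - v)"
  have Hc: "H \<in> carrier_mat (d+1) (d+1)" unfolding H_def using house_carrier u vc by auto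
  have Ho: "orthm (d+1) H" unfolding H_def using house_orthm u vc by auto
  have Hu: "H *\<^sub>v u = v" unfolding H_def using house_unit[OF u vc uu vv] .
  define N where "N = A * H"
  have Nc: "N \<in> carrier_mat (d+1) (d+1)" unfolding N_def using Ac Hc by auto
  have No: "orthm (d+1) N" unfolding N_def using orthm_mult[OF A Ho] .
  have Nu: "N *\<^sub>v u = u"
  proof -
    have "N *\<^sub>v u = A *\<^sub>v (H *\<^sub>v u)" unfolding N_def by (rule assoc_mult_mat_vec) (use Ac Hc u in auto)
    then show ?thesis using Hu Av by simp
  qed
  have NTu: "N\<^sup>T *\<^sub>v u = u" using orthm_act1[OF No u] Nu by simp
  define Om where "Om = B\<^sup>T * N * B"
  have Omc: "Om \<in> carrier_mat d d" unfolding Om_def using B Nc by auto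
  have Omx: "Om *\<^sub>v x = B\<^sup>T *\<^sub>v (N *\<^sub>v (B *\<^sub>v x))" if x: "x \<in> carrier_vec d" for x
  proof -
    have "Om *\<^sub>v x = (B\<^sup>T * N) *\<^sub>v (B *\<^sub>v x)" unfolding Om_def
      by (rule assoc_mult_mat_vec) (use B Nc x in auto)
    also have "\<dots> = B\<^sup>T *\<^sub>v (N *\<^sub>v (B *\<^sub>v x))"
      by (rule assoc_mult_mat_vec) (use B Nc x in auto)
    finally show ?thesis .
  qed
  have OmT: "Om\<^sup>T = B\<^sup>T * N\<^sup>T * B"
  proof -
    have "Om\<^sup>T = B\<^sup>T * (B\<^sup>T * N)\<^sup>T" unfolding Om_def
      by (subst transpose_mult[of _ d "d+1" B d]) (use B Nc in auto)
    also have "(B\<^sup>T * N)\<^sup>T = N\<^sup>T * B" by (subst transpose_mult[of _ d "d+1" N "d+1"]) (use B Nc in auto)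
    also have "B\<^sup>T * (N\<^sup>T * B) = B\<^sup>T * N\<^sup>T * B"
      using assoc_mult_mat[of "B\<^sup>T" d "d+1" "N\<^sup>T" "d+1" B d] B Nc by auto
    finally show ?thesis .
  qed
  have OmTx: "Om\<^sup>T *\<^sub>v x = B\<^sup>T *\<^sub>v (N\<^sup>T *\<^sub>v (B *\<^sub>v x))" if x: "x \<in> carrier_vec d" for x
  proof -
    have "Om\<^sup>T *\<^sub>v x = (B\<^sup>T * N\<^sup>T) *\<^sub>v (B *\<^sub>v x)" unfolding OmT
      by (rule assoc_mult_mat_vec) (use B Nc x in auto)
    also have "\<dots> = B\<^sup>T *\<^sub>v (N\<^sup>T *\<^sub>v (B *\<^sub>v x))"
      by (rule assoc_mult_mat_vec) (use B Nc x in auto)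
    finally show ?thesis .
  qed
  have Omo: "orthm d Om"
  proof (rule orthm_of_act[OF Omc])
    fix x :: "real vec" assume x: "x \<in> carrier_vec d"
    define y where "y = N *\<^sub>v (B *\<^sub>v x)"
    have yc: "y \<in> carrier_vec (d+1)" unfolding y_def using Nc B x by auto
    have "u \<bullet> y = (N\<^sup>T *\<^sub>v u) \<bullet> (B *\<^sub>v x)" unfolding y_def
      using transpose_vec_mult_scalar[OF Nc _ u, of "B *\<^sub>v x"] B x by auto
    also have "\<dots> = 0" using NTu u_perp[OF B u Bu x] by simp
    finally have uy: "u \<bullet> y = 0" .
    have "B *\<^sub>v (B\<^sup>T *\<^sub>v y) = y"
    proof -
      have "B *\<^sub>v (B\<^sup>T *\<^sub>v y) + (u \<bullet> y) \<cdot>\<^sub>v u = y" using decomp[OF B BB u uu Bu yc] .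
      moreover have "B *\<^sub>v (B\<^sup>T *\<^sub>v y) + (u \<bullet> y) \<cdot>\<^sub>v u = B *\<^sub>v (B\<^sup>T *\<^sub>v y)"
        unfolding uy by (rule eq_vecI) (use B yc u in auto)
      ultimately show ?thesis by simp
    qed
    then have BOm: "B *\<^sub>v (Om *\<^sub>v x) = y" using Omx[OF x] unfolding y_def by simp
    have Oc: "Om *\<^sub>v x \<in> carrier_vec d" using Omc x by auto
    have "Om\<^sup>T *\<^sub>v (Om *\<^sub>v x) = B\<^sup>T *\<^sub>v (N\<^sup>T *\<^sub>v y)"
      using OmTx[OF Oc] BOm by simp
    also have "N\<^sup>T *\<^sub>v y = B *\<^sub>v x" unfolding y_def using orthm_act1[OF No] B x by auto
    finally show "Om\<^sup>T *\<^sub>v (Om *\<^sub>v x) = x" using BtB[OF B BB x] by simp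
  qed
  have "Q ! i = Om *\<^sub>v (P ! i)" if i: "i < length P" for i
  proof -
    have p: "P ! i \<in> carrier_vec d" using P i by auto
    have q: "Q ! i \<in> carrier_vec d" using Q i len by auto
    have Bp: "B *\<^sub>v (P ! i) \<in> carrier_vec (d+1)" using B p by auto
    have "v \<bullet> (B *\<^sub>v (P ! i)) = u \<bullet> (A *\<^sub>v (B *\<^sub>v (P ! i)))" unfolding v_def
      using transpose_vec_mult_scalar[OF Ac Bp u] .
    also have "\<dots> = 0" unfolding pq[OF i] using u_perp[OF B u Bu q] .
    finally have vB: "v \<bullet> (B *\<^sub>v (P ! i)) = 0" .
    have HB: "H *\<^sub>v (B *\<^sub>v (P ! i)) = B *\<^sub>v (P ! i)" unfolding H_def
      using house_fix[OF u vc Bp u_perp[OF B u Bu p] vB] .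
    have "N *\<^sub>v (B *\<^sub>v (P ! i)) = A *\<^sub>v (H *\<^sub>v (B *\<^sub>v (P ! i)))" unfolding N_def
      by (rule assoc_mult_mat_vec) (use Ac Hc Bp in auto)
    also have "\<dots> = B *\<^sub>v (Q ! i)" using HB pq[OF i] by simp
    finally have "Om *\<^sub>v (P ! i) = B\<^sup>T *\<^sub>v (B *\<^sub>v (Q ! i))" using Omx[OF p] by simp
    then show ?thesis using BtB[OF B BB q] by simp
  qed
  then have "Q = map (\<lambda>v. Om *\<^sub>v v) P" using len by (intro nth_equalityI) auto
  then show ?thesis using Omo by auto
qed

lemma mult_zero_vec': fixes A :: "real mat" assumes "A \<in> carrier_mat n m" shows "A *\<^sub>v 0\<^sub>v m = 0\<^sub>v n"
  by (rule eq_vecI) (use assms in \<open>auto simp: scalar_prod_def\<close>)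

lemma Vsp_carrier: "P \<in> Vsp d l \<Longrightarrow> set P \<subseteq> carrier_vec d \<and> length P = length l - 1"
  unfolding Vsp_def by auto

lemma vtx_carrier: assumes "set P \<subseteq> carrier_vec d" "length P = n - 1" "i \<le> n"
  shows "vtx d n P i \<in> carrier_vec d"
proof (cases "i = 0 \<or> i = n")
  case False
  then have "i - 1 < length P" using assms by auto
  then show ?thesis using assms False unfolding vtx_def by auto
qed (auto simp: vtx_def)

lemma vtx_map: fixes Om :: "real mat" assumes Om: "Om \<in> carrier_mat d d"
  and P: "set P \<subseteq> carrier_vec d" "length P = n - 1" and i: "i \<le> n"
  shows "vtx d n (map (\<lambda>v. Om *\<^sub>v v) P) i = Om *\<^sub>v vtx d n P i"
proof (cases "i = 0 \<or> i = n")
  case True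
  then show ?thesis unfolding vtx_def using mult_zero_vec'[OF Om] by auto
next
  case False
  then have "i - 1 < length P" using P i by auto
  then show ?thesis using False unfolding vtx_def by auto
qed

lemma Vsp_orth: assumes Om: "orthm d Om" and P: "P \<in> Vsp d l"
  shows "map (\<lambda>v. Om *\<^sub>v v) P \<in> Vsp d l"
proof -
  have Omc: "Om \<in> carrier_mat d d" using Om orthm_def by auto
  have Pc: "set P \<subseteq> carrier_vec d" and len: "length P = length l - 1" using Vsp_carrier[OF P] by auto
  have "enorm (vtx d (length l) (map (\<lambda>v. Om *\<^sub>v v) P) i - vtx d (length l) (map (\<lambda>v. Om *\<^sub>v v) P) (i - 1))
        = l ! (i - 1)" if i: "i \<in> {1..length l}" for i
  proof -
    let ?a = "vtx d (length l) P i" and ?b = "vtx d (length l) P (i - 1)"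
    have a: "?a \<in> carrier_vec d" using vtx_carrier[OF Pc len] i by auto
    have b: "?b \<in> carrier_vec d" using vtx_carrier[OF Pc len] i by auto
    have "vtx d (length l) (map (\<lambda>v. Om *\<^sub>v v) P) i - vtx d (length l) (map (\<lambda>v. Om *\<^sub>v v) P) (i - 1)
        = Om *\<^sub>v ?a - Om *\<^sub>v ?b" using vtx_map[OF Omc Pc len] i by auto
    also have "\<dots> = Om *\<^sub>v (?a - ?b)" using mult_minus_distrib_mat_vec[OF Omc a b] by simp
    finally have "enorm (vtx d (length l) (map (\<lambda>v. Om *\<^sub>v v) P) i - vtx d (length l) (map (\<lambda>v. Om *\<^sub>v v) P) (i - 1))
       = enorm (?a - ?b)" unfolding enorm_def using orthm_scalar[OF Om, of "?a - ?b" "?a - ?b"] a b by auto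
    also have "\<dots> = l ! (i - 1)" using P i unfolding Vsp_def by auto
    finally show ?thesis .
  qed
  then show ?thesis unfolding Vsp_def using len Pc Omc by auto
qed

definition rel :: "nat \<Rightarrow> real vec list \<Rightarrow> real vec list \<Rightarrow> bool" where
  "rel d X Y \<longleftrightarrow> (\<exists>Om. orthm d Om \<and> Y = map (\<lambda>v. Om *\<^sub>v v) X)"

lemma cls_rel: "Y \<in> cls d X \<Longrightarrow> rel d X Y"
  unfolding cls_def rel_def SOd_iff by auto

lemma rel_trans: assumes "rel d X Y" "rel d Y Z" "set X \<subseteq> carrier_vec d" shows "rel d X Z"
proof -
  obtain O1 O2 where O: "orthm d O1" "Y = map (\<lambda>v. O1 *\<^sub>v v) X" "orthm d O2" "Z = map (\<lambda>v. O2 *\<^sub>v v) Y"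
    using assms unfolding rel_def by auto
  have "Z = map (\<lambda>v. (O2 * O1) *\<^sub>v v) X" using O map_map_mat[OF assms(3), of O2 d d O1] orthm_def by auto
  moreover have "orthm d (O2 * O1)" using orthm_mult O by auto
  ultimately show ?thesis unfolding rel_def by blast
qed

lemma rel_sym: assumes "rel d X Y" "set X \<subseteq> carrier_vec d" shows "rel d Y X"
proof -
  obtain O1 where O: "orthm d O1" "Y = map (\<lambda>v. O1 *\<^sub>v v) X" using assms unfolding rel_def by auto
  have c: "O1 \<in> carrier_mat d d" using O orthm_def by auto
  have "map (\<lambda>v. O1\<^sup>T *\<^sub>v v) Y = map (\<lambda>v. (O1\<^sup>T * O1) *\<^sub>v v) X"
    using O map_map_mat[OF assms(2), of "O1\<^sup>T" d d O1] c by auto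
  also have "\<dots> = X" using orthm_T[OF O(1)] assms(2) by (auto intro!: map_idI simp: subset_iff)
  finally show ?thesis unfolding rel_def using orthm_transpose[OF O(1)] by metis
qed

lemma Fmap_carrier: "set X \<subseteq> carrier_vec d \<Longrightarrow> B \<in> carrier_mat (d+1) d \<Longrightarrow> set (Fmap B X) \<subseteq> carrier_vec (d+1)"
  unfolding Fmap_def by auto

context
  fixes d :: nat and B :: "real mat" and u :: "real vec"
  assumes B: "B \<in> carrier_mat (d+1) d" and BB: "B\<^sup>T * B = 1\<^sub>m d"
  and u: "u \<in> carrier_vec (d+1)" and uu: "u \<bullet> u = 1" and Bu: "B\<^sup>T *\<^sub>v u = 0\<^sub>v d"
begin

lemma phi_eq_rel: assumes X: "set X \<subseteq> carrier_vec d" and Y: "set Y \<subseteq> carrier_vec d"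
  shows "cls (d+1) (Fmap B Y) = cls (d+1) (Fmap B X) \<longleftrightarrow> rel d X Y"
proof
  assume eq: "cls (d+1) (Fmap B Y) = cls (d+1) (Fmap B X)"
  have "Fmap B Y \<in> cls (d+1) (Fmap B X)" using eq cls_refl[OF Fmap_carrier[OF Y B]] by auto
  then obtain A where A: "A \<in> SOd (d+1)" "Fmap B Y = map (\<lambda>v. A *\<^sub>v v) (Fmap B X)"
    unfolding cls_def by auto
  have "map (\<lambda>v. A *\<^sub>v (B *\<^sub>v v)) X = map (\<lambda>v. B *\<^sub>v v) Y" using A(2) unfolding Fmap_def by auto
  then show "rel d X Y" unfolding rel_def
    using descend_orth[OF B BB u uu Bu _ X Y] A(1) SOd_iff by auto
next
  assume "rel d X Y"
  then obtain Om where Om: "orthm d Om" "Y = map (\<lambda>v. Om *\<^sub>v v) X" unfolding rel_def by auto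
  obtain A where A: "A \<in> SOd (d+1)" "\<forall>x\<in>carrier_vec d. A *\<^sub>v (B *\<^sub>v x) = B *\<^sub>v (Om *\<^sub>v x)"
    using lift_orth[OF B BB u uu Bu Om(1)] by auto
  have "Fmap B Y = map (\<lambda>v. A *\<^sub>v v) (Fmap B X)" unfolding Fmap_def Om(2) using A(2) X by auto
  then have "Fmap B Y \<in> cls (d+1) (Fmap B X)" unfolding cls_def using A(1) by auto
  then show "cls (d+1) (Fmap B Y) = cls (d+1) (Fmap B X)" using cls_eq Fmap_carrier[OF X B] by auto
qed

end

lemma normalize_vec: fixes w :: "real vec" assumes w: "w \<in> carrier_vec m" "w \<noteq> 0\<^sub>v m"
  shows "\<exists>w'. w' \<in> carrier_vec m \<and> w' \<bullet> w' = 1 \<and> (\<forall>y\<in>carrier_vec m. w \<bullet> y = 0 \<longrightarrow> w' \<bullet> y = 0)"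
proof -
  have "w \<bullet> w \<noteq> 0" using self_scalar_zero w by auto
  then have pos: "w \<bullet> w > 0" using self_scalar_nonneg[of w] by auto
  define s where "s = sqrt (w \<bullet> w)"
  have s: "s > 0" "s * s = w \<bullet> w" using pos unfolding s_def by auto
  define u where "u = (1 / s) \<cdot>\<^sub>v w"
  have u: "u \<in> carrier_vec m" unfolding u_def using w by auto
  have "u \<bullet> u = (1/s) * (1/s) * (w \<bullet> w)" unfolding u_def using w by auto
  also have "\<dots> = 1" unfolding s(2)[symmetric] using s(1) by (simp add: field_simps)
  finally have uu: "u \<bullet> u = 1" .
  have "\<forall>y\<in>carrier_vec m. w \<bullet> y = 0 \<longrightarrow> u \<bullet> y = 0" unfolding u_def using w by auto
  then show ?thesis using u uu by auto
qed

theorem proposition5p2: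
  fixes l :: "real list" and d :: nat and B :: "real mat" and P :: "real vec list"
  assumes "length l \<ge> 3" and "d \<ge> 2" and "\<forall>x\<in>set l. x > 0"
    and "lin_isom d B"
    and "P \<in> Vsp d l"
  shows "(pdim d P = d \<longrightarrow> card {c \<in> Msp d l. phi d B c = phi d B (cls d P)} = 2)
       \<and> (pdim d P < d \<longrightarrow> card {c \<in> Msp d l. phi d B c = phi d B (cls d P)} = 1)"
proof -
  have Bc: "B \<in> carrier_mat (d+1) d" and BB: "B\<^sup>T * B = 1\<^sub>m d" using assms(4) unfolding lin_isom_def by auto
  obtain u where u: "u \<in> carrier_vec (d+1)" "u \<bullet> u = 1" "B\<^sup>T *\<^sub>v u = 0\<^sub>v d" using u_exists[OF Bc] by auto
  have PV: "P \<in> Vsp d l" using assms(5) .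
  have Pc: "set P \<subseteq> carrier_vec d" using Vsp_carrier[OF PV] by auto
  have d1: "d \<ge> 1" using assms(2) by auto
  define R where "R = Rm d"
  have Ro: "orthm d R" unfolding R_def using Rm_orthm .
  have Rc: "R \<in> carrier_mat d d" using Ro orthm_def by auto
  have Rd: "det R = -1" unfolding R_def using Rm_det[OF d1] .
  define RP where "RP = map (\<lambda>v. R *\<^sub>v v) P"
  have RPV: "RP \<in> Vsp d l" unfolding RP_def using Vsp_orth[OF Ro PV] .
  have RPc: "set RP \<subseteq> carrier_vec d" using Vsp_carrier[OF RPV] by auto
  have cls_c: "set Q0 \<subseteq> carrier_vec d" if "Q0 \<in> cls d Q" "set Q \<subseteq> carrier_vec d" for Q Q0
  proof -
    from that(1) obtain A where A: "A \<in> carrier_mat d d" "Q0 = map (\<lambda>v. A *\<^sub>v v) Q"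
      unfolding cls_def SOd_def by auto
    show ?thesis unfolding A(2) using mult_mat_vec_carrier[OF A(1)] that(2) by auto
  qed
  have phi_cls: "\<exists>Q0. Q0 \<in> cls d Q \<and> phi d B (cls d Q) = cls (d+1) (Fmap B Q0)"
    if Q: "set Q \<subseteq> carrier_vec d" for Q
  proof -
    have "(SOME x. x \<in> cls d Q) \<in> cls d Q" using cls_refl[OF Q] by (rule someI)
    then show ?thesis unfolding phi_def by auto
  qed
  have key: "phi d B (cls d Q) = phi d B (cls d P) \<longleftrightarrow> rel d P Q" if Q: "set Q \<subseteq> carrier_vec d" for Q
  proof -
    obtain Q0 where Q0: "Q0 \<in> cls d Q" "phi d B (cls d Q) = cls (d+1) (Fmap B Q0)" using phi_cls[OF Q] by auto
    obtain P0 where P0: "P0 \<in> cls d P" "phi d B (cls d P) = cls (d+1) (Fmap B P0)" using phi_cls[OF Pc] by auto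
    have Q0c: "set Q0 \<subseteq> carrier_vec d" using cls_c Q0 Q by auto
    have P0c: "set P0 \<subseteq> carrier_vec d" using cls_c P0 Pc by auto
    have "phi d B (cls d Q) = phi d B (cls d P) \<longleftrightarrow> rel d P0 Q0"
      unfolding Q0 P0 using phi_eq_rel[OF Bc BB u P0c Q0c] .
    also have "\<dots> \<longleftrightarrow> rel d P Q"
    proof
      assume r: "rel d P0 Q0"
      have "rel d P Q0" using rel_trans[OF cls_rel[OF P0(1)] r Pc] .
      moreover have "rel d Q0 Q" using rel_sym[OF cls_rel[OF Q0(1)] Q] .
      ultimately show "rel d P Q" using rel_trans Pc by blast
    next
      assume r: "rel d P Q"
      have "rel d P0 Q" using rel_trans[OF rel_sym[OF cls_rel[OF P0(1)] Pc] r P0c] .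
      then show "rel d P0 Q0" using rel_trans[OF _ cls_rel[OF Q0(1)] P0c] by blast
    qed
    finally show ?thesis .
  qed
  have two: "cls d Q = cls d P \<or> cls d Q = cls d RP" if r: "rel d P Q" for Q
  proof -
    obtain Om where Om: "orthm d Om" "Q = map (\<lambda>v. Om *\<^sub>v v) P" using r unfolding rel_def by auto
    have Omc: "Om \<in> carrier_mat d d" using Om orthm_def by auto
    show ?thesis
    proof (cases "det Om = 1")
      case True
      then have "Q \<in> cls d P" using cls_orth[OF Om(1)] Om by auto
      then show ?thesis using cls_eq[OF _ Pc] by auto
    next
      case False
      then have dO: "det Om = -1" using orthm_det[OF Om(1)] by auto
      have RT: "R\<^sup>T = R" unfolding R_def Rm_def multrow_mat_def by (intro eq_matI) auto
      have RR: "R * R = 1\<^sub>m d" using Ro RT unfolding orthm_def by auto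
      have "map (\<lambda>v. (Om * R) *\<^sub>v v) RP = map (\<lambda>v. ((Om * R) * R) *\<^sub>v v) P"
        unfolding RP_def using map_map_mat[OF Pc, of "Om * R" d d R] Omc Rc by auto
      also have "(Om * R) * R = Om" using Omc Rc RR by (simp add: assoc_mult_mat[of Om d d R d R d])
      finally have "Q = map (\<lambda>v. (Om * R) *\<^sub>v v) RP" using Om by simp
      moreover have "orthm d (Om * R)" using orthm_mult[OF Om(1) Ro] .
      moreover have "det (Om * R) = 1" using det_mult[OF Omc Rc] dO Rd by simp
      ultimately have "Q \<in> cls d RP" using cls_orth by auto
      then show ?thesis using cls_eq[OF _ RPc] by auto
    qed
  qed
  have relPP: "rel d P P" unfolding rel_def using orthm_one[of d] Pc
    by (intro exI[of _ "1\<^sub>m d"]) (auto intro!: map_idI[symmetric] simp: subset_iff)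
  have relPRP: "rel d P RP" unfolding rel_def RP_def using Ro by auto
  have S: "{c \<in> Msp d l. phi d B c = phi d B (cls d P)} = {cls d P, cls d RP}"
  proof
    show "{c \<in> Msp d l. phi d B c = phi d B (cls d P)} \<subseteq> {cls d P, cls d RP}"
    proof
      fix c assume "c \<in> {c \<in> Msp d l. phi d B c = phi d B (cls d P)}"
      then obtain Q where Q: "Q \<in> Vsp d l" "c = cls d Q" "phi d B c = phi d B (cls d P)"
        unfolding Msp_def by auto
      have Qc: "set Q \<subseteq> carrier_vec d" using Vsp_carrier[OF Q(1)] by auto
      have "rel d P Q" using key[OF Qc] Q by auto
      then show "c \<in> {cls d P, cls d RP}" using two Q by auto
    qed
    show "{cls d P, cls d RP} \<subseteq> {c \<in> Msp d l. phi d B c = phi d B (cls d P)}"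
      using PV RPV key[OF RPc] relPRP unfolding Msp_def by auto
  qed
  have M: "mat_of_cols d P \<in> carrier_mat d (length P)" by auto
  have colsM: "cols (mat_of_cols d P) = P" using Pc by auto
  interpret vs: vec_space "TYPE(real)" d .
  have part1: "cls d P \<noteq> cls d RP" if pd: "pdim d P = d"
  proof
    assume eq: "cls d P = cls d RP"
    have "RP \<in> cls d P" using eq cls_refl[OF RPc] by auto
    then obtain A where A: "A \<in> SOd d" "RP = map (\<lambda>v. A *\<^sub>v v) P" unfolding cls_def by auto
    have Ac: "A \<in> carrier_mat d d" using A SOd_def by auto
    have RA: "R *\<^sub>v c = A *\<^sub>v c" if "c \<in> set P" for c
      using A(2) that unfolding RP_def by (auto simp: map_eq_conv)
    have "R = A"
    proof (rule ccontr)
      assume "R \<noteq> A"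
      then obtain i j where ij: "i < d" "j < d" "R $$ (i,j) \<noteq> A $$ (i,j)"
        using Rc Ac by (metis carrier_matD eq_matI)
      define w where "w = row R i - row A i"
      have wc: "w \<in> carrier_vec d" unfolding w_def using Rc Ac ij by auto
      have "w $ j \<noteq> 0" unfolding w_def using Rc Ac ij by auto
      then have wn: "w \<noteq> 0\<^sub>v d" using ij by auto
      have "\<forall>c\<in>set (cols (mat_of_cols d P)). w \<bullet> c = 0"
      proof
        fix c assume "c \<in> set (cols (mat_of_cols d P))"
        then have c: "c \<in> set P" using colsM by auto
        have cc: "c \<in> carrier_vec d" using c Pc by auto
        have "w \<bullet> c = row R i \<bullet> c - row A i \<bullet> c" unfolding w_def
          using minus_scalar_prod_distrib[of "row R i" d "row A i" c] Rc Ac ij cc by auto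
        also have "\<dots> = (R *\<^sub>v c) $ i - (A *\<^sub>v c) $ i" using Rc Ac ij by auto
        finally show "w \<bullet> c = 0" using RA[OF c] by simp
      qed
      then have "vs.rank (mat_of_cols d P) < d" using vs.orth_low_rank[OF M wc wn] by auto
      then show False using pd unfolding pdim_def by auto
    qed
    then show False using Rd A(1) SOd_def by auto
  qed
  have part2: "cls d RP = cls d P" if pd: "pdim d P < d"
  proof -
    obtain w where w: "w \<in> carrier_vec d" "w \<noteq> 0\<^sub>v d" "\<forall>c\<in>set (cols (mat_of_cols d P)). w \<bullet> c = 0"
      using vs.low_rank_orth[OF M] pd unfolding pdim_def by auto
    obtain w' where w': "w' \<in> carrier_vec d" "w' \<bullet> w' = 1" "\<forall>y\<in>carrier_vec d. w \<bullet> y = 0 \<longrightarrow> w' \<bullet> y = 0"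
      using normalize_vec[OF w(1,2)] by auto
    obtain F where F: "orthm d F" "det F = -1" "\<forall>y\<in>carrier_vec d. w' \<bullet> y = 0 \<longrightarrow> F *\<^sub>v y = y"
      using refl_exists[OF d1 w'(1,2)] by auto
    have Fc: "F \<in> carrier_mat d d" using F orthm_def by auto
    have FP: "map (\<lambda>v. F *\<^sub>v v) P = P"
    proof (rule map_idI)
      fix c assume c: "c \<in> set P"
      then have "w \<bullet> c = 0" using w(3) colsM by auto
      then show "F *\<^sub>v c = c" using w'(3) F(3) c Pc by auto
    qed
    have "RP = map (\<lambda>v. R *\<^sub>v v) (map (\<lambda>v. F *\<^sub>v v) P)" unfolding RP_def FP ..
    also have "\<dots> = map (\<lambda>v. (R * F) *\<^sub>v v) P" using map_map_mat[OF Pc Rc Fc] .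
    finally have "RP \<in> cls d P" using cls_orth[OF orthm_mult[OF Ro F(1)]] det_mult[OF Rc Fc] Rd F(2) by auto
    then show ?thesis using cls_eq[OF _ Pc] by auto
  qed
  show ?thesis unfolding S using part1 part2 by auto
qed

end
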